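(* Let $H\in(0,1)$ with $H\neq1/2$, $T>0$, and let $X=S^H$ be a sub-fractional Brownian motion with index $H$. Then (a) $\displaystyle\lim_{h\to0+}\sup_{h\le t\le T-h}\Big|\frac{\mathbb{E}(X_{t+h}-2X_t+X_{t-h})^2}{h^{2H}}-(4-2^{2H})\Big|>0$; (b) for every $\varphi\in\Psi$, $\displaystyle\lim_{h\to0+}\sup_{\varphi(h)\le t\le T-h}\Big|\frac{\mathbb{E}(X_{t+h}-2X_t+X_{t-h})^2}{h^{2H}}-(4-2^{2H})\Big|=0$.
   Context: A sub-fractional Brownian motion with index $H\in(0,1)$ is a mean zero Gaussian process $(S^H_t)_{t\ge0}$ with covariance $G_H(s,t)=s^{2H}+t^{2H}-\tfrac12[(s+t)^{2H}+|s-t|^{2H}]$. $\Psi$ is the class of continuous $\varphi\colon(0,T]\to[0,\infty)$ with $\varphi(h)\to0$, $L(h):=\varphi(h)/h\to\infty$, $hL(h)^3\to0$ as $h\downarrow0$. *)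

theory Defs
  imports "HOL-Probability.Probability"
begin

definition subfbm_cov :: "real \<Rightarrow> real \<Rightarrow> real \<Rightarrow> real" where
  "subfbm_cov H s t = s powr (2*H) + t powr (2*H)
      - (1/2) * ((s + t) powr (2*H) + \<bar>s - t\<bar> powr (2*H))"

definition gaussian_rv :: "'a measure \<Rightarrow> ('a \<Rightarrow> real) \<Rightarrow> bool" where
  "gaussian_rv M Y \<longleftrightarrow>
     (\<exists>\<mu> \<sigma>. 0 < \<sigma> \<and> distributed M lborel Y (normal_density \<mu> \<sigma>))
     \<or> (\<exists>a. AE \<omega> in M. Y \<omega> = a)"

definition sub_fbm :: "'a measure \<Rightarrow> real \<Rightarrow> (real \<Rightarrow> 'a \<Rightarrow> real) \<Rightarrow> bool" where
  "sub_fbm M H X \<longleftrightarrow>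
     prob_space M
   \<and> (\<forall>t\<ge>0. X t \<in> borel_measurable M \<and> integrable M (\<lambda>\<omega>. (X t \<omega>)\<^sup>2)
            \<and> integral\<^sup>L M (X t) = 0)
   \<and> (\<forall>s\<ge>0. \<forall>t\<ge>0. integral\<^sup>L M (\<lambda>\<omega>. X s \<omega> * X t \<omega>) = subfbm_cov H s t)
   \<and> (\<forall>I c. finite I \<and> I \<subseteq> {0..} \<longrightarrow> gaussian_rv M (\<lambda>\<omega>. \<Sum>t\<in>I. c t * X t \<omega>))"

definition Psi :: "real \<Rightarrow> (real \<Rightarrow> real) set" where
  "Psi T = {\<phi>. continuous_on {0<..T} \<phi>
     \<and> (\<forall>h\<in>{0<..T}. 0 \<le> \<phi> h)
     \<and> (\<phi> \<longlongrightarrow> 0) (at_right 0)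
     \<and> filterlim (\<lambda>h. \<phi> h / h) at_top (at_right 0)
     \<and> ((\<lambda>h. h * (\<phi> h / h) ^ 3) \<longlongrightarrow> 0) (at_right 0)}"

end

theory Submission
  imports Defs "HOL-Real_Asymp.Real_Asymp"
begin

definition D4 :: "real \<Rightarrow> real \<Rightarrow> real" where
  "D4 p x = (x+2) powr p - 4*(x+1) powr p + 6*x powr p - 4*(x-1) powr p + (x-2) powr p"

lemma D4_lim:
  assumes "0<p" "p<2" "p\<noteq>1"
  shows "((\<lambda>x. D4 p x) \<longlongrightarrow> 0) at_top"
proof (cases "p<1")
  case True then show ?thesis unfolding D4_def using assms by real_asymp
next
  case False then have "1<p" using assms by auto
  then show ?thesis unfolding D4_def using assms by real_asymp
qed

lemma D4_nz:
  assumes "0<p" "p<2" "p\<noteq>1"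
  shows "eventually (\<lambda>x. D4 p x \<noteq> 0) at_top"
proof -
  have lim: "((\<lambda>x. x powr (4-p) * D4 p x) \<longlongrightarrow> p*(p-1)*(p-2)*(p-3)) at_top"
  proof (cases "p<1")
    case True then show ?thesis unfolding D4_def using assms by real_asymp
  next
    case False then have "1<p" using assms by auto
    then show ?thesis unfolding D4_def using assms by real_asymp
  qed
  have "p*(p-1)*(p-2)*(p-3) \<noteq> 0" using assms by auto
  from tendsto_imp_eventually_ne[OF lim this] show ?thesis
    by (rule eventually_mono) auto
qed

lemma prod_integrable:
  fixes f g :: "'a \<Rightarrow> real"
  assumes "f \<in> borel_measurable M" "g \<in> borel_measurable M"
    "integrable M (\<lambda>x. (f x)\<^sup>2)" "integrable M (\<lambda>x. (g x)\<^sup>2)"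
  shows "integrable M (\<lambda>x. f x * g x)"
proof (rule Bochner_Integration.integrable_bound[where f="\<lambda>x. (f x)\<^sup>2 + (g x)\<^sup>2"])
  show "integrable M (\<lambda>x. (f x)\<^sup>2 + (g x)\<^sup>2)" using assms by auto
  show "(\<lambda>x. f x * g x) \<in> borel_measurable M" using assms by auto
  show "AE x in M. norm (f x * g x) \<le> norm ((f x)\<^sup>2 + (g x)\<^sup>2)"
  proof (rule AE_I2)
    fix x
    have "2*\<bar>f x\<bar>*\<bar>g x\<bar> \<le> (f x)\<^sup>2 + (g x)\<^sup>2"
      using sum_squares_bound[of "\<bar>f x\<bar>" "\<bar>g x\<bar>"] by (simp add: power2_eq_square)
    moreover have "0 \<le> \<bar>f x\<bar>*\<bar>g x\<bar>" by simp
    ultimately have "\<bar>f x\<bar>*\<bar>g x\<bar> \<le> (f x)\<^sup>2 + (g x)\<^sup>2" by linarith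
    then show "norm (f x * g x) \<le> norm ((f x)\<^sup>2 + (g x)\<^sup>2)"
      by (simp add: abs_mult)
  qed
qed

lemma E_cov:
  assumes X: "sub_fbm M H X" and "a\<ge>0" "b\<ge>0" "c\<ge>0"
  shows "integral\<^sup>L M (\<lambda>\<omega>. (X a \<omega> - 2 * X b \<omega> + X c \<omega>)\<^sup>2) =
    subfbm_cov H a a + 4 * subfbm_cov H b b + subfbm_cov H c c - 4 * subfbm_cov H a b
    + 2 * subfbm_cov H a c - 4 * subfbm_cov H b c"
proof -
  have m: "\<And>s. s\<ge>0 \<Longrightarrow> X s \<in> borel_measurable M \<and> integrable M (\<lambda>\<omega>. (X s \<omega>)\<^sup>2)"
    using X unfolding sub_fbm_def by blast
  have cov: "\<And>s t. s\<ge>0 \<Longrightarrow> t\<ge>0 \<Longrightarrow> integral\<^sup>L M (\<lambda>\<omega>. X s \<omega> * X t \<omega>) = subfbm_cov H s t"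
    using X unfolding sub_fbm_def by blast
  have I: "\<And>s t. s\<ge>0 \<Longrightarrow> t\<ge>0 \<Longrightarrow> integrable M (\<lambda>\<omega>. X s \<omega> * X t \<omega>)"
    using m prod_integrable by blast
  have eq: "(\<lambda>\<omega>. (X a \<omega> - 2 * X b \<omega> + X c \<omega>)\<^sup>2) =
     (\<lambda>\<omega>. ((((X a \<omega> * X a \<omega> + 4 * (X b \<omega> * X b \<omega>)) + X c \<omega> * X c \<omega>) - 4 * (X a \<omega> * X b \<omega>))
       + 2 * (X a \<omega> * X c \<omega>)) - 4 * (X b \<omega> * X c \<omega>))"
    by (rule ext) (simp add: power2_eq_square algebra_simps)
  note Ia = I[OF assms(2) assms(2)] and Ib = I[OF assms(3) assms(3)] and Ic = I[OF assms(4) assms(4)]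
    and Iab = I[OF assms(2) assms(3)] and Iac = I[OF assms(2) assms(4)] and Ibc = I[OF assms(3) assms(4)]
  show ?thesis unfolding eq
    by (simp add: Bochner_Integration.integral_add Bochner_Integration.integral_diff Ia Ib Ic Iab Iac Ibc cov assms)
qed


lemma cov_identity:
  assumes "0<h" "h\<le>t" "0<H"
  shows "subfbm_cov H (t+h) (t+h) + 4 * subfbm_cov H t t + subfbm_cov H (t-h) (t-h)
    - 4 * subfbm_cov H (t+h) t + 2 * subfbm_cov H (t+h) (t-h) - 4 * subfbm_cov H t (t-h)
   = (4 - 2 powr (2*H)) * h powr (2*H) - 1/2 * ((2*t+2*h) powr (2*H) - 4*(2*t+h) powr (2*H)
      + 6*(2*t) powr (2*H) - 4*(2*t-h) powr (2*H) + (2*t-2*h) powr (2*H))"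
proof -
  have e1: "(t+h)+(t+h) = 2*t+2*h" "t+t = 2*t" "(t-h)+(t-h) = 2*t-2*h" "(t+h)+t = 2*t+h"
    "(t+h)+(t-h) = 2*t" "t+(t-h) = 2*t-h" by simp_all
  have e2: "\<bar>(t+h)-(t+h)\<bar> = 0" "\<bar>t-t\<bar> = 0" "\<bar>(t-h)-(t-h)\<bar> = 0" "\<bar>(t+h)-t\<bar> = h"
    "\<bar>(t+h)-(t-h)\<bar> = 2*h" "\<bar>t-(t-h)\<bar> = h" using assms by simp_all
  have z: "(0::real) powr (2*H) = 0" by simp
  have m: "(2*h) powr (2*H) = 2 powr (2*H) * h powr (2*H)" using assms by (simp add: powr_mult)
  show ?thesis unfolding subfbm_cov_def
    apply (simp only: e1 e2 z m)
    apply (simp add: algebra_simps)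
    done
qed

lemma hom:
  fixes h w p :: real
  assumes "0<h" "0\<le>w"
  shows "w powr p = h powr p * (w/h) powr p"
proof -
  have "w = h*(w/h)" using assms by (simp add: field_simps)
  then have "w powr p = (h*(w/h)) powr p" by simp
  also have "... = h powr p * (w/h) powr p" using assms by (intro powr_mult)
  finally show ?thesis .
qed

lemma bracket_hom:
  assumes "0<h" "h\<le>t"
  shows "(2*t+2*h) powr p - 4*(2*t+h) powr p + 6*(2*t) powr p - 4*(2*t-h) powr p + (2*t-2*h) powr p
     = h powr p * D4 p (2*t/h)"
proof -
  have a: "(2*t+2*h)/h = 2*t/h+2" "(2*t+h)/h = 2*t/h+1" "(2*t-h)/h = 2*t/h-1" "(2*t-2*h)/h = 2*t/h-2"
    using assms by (simp_all add: field_simps)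
  have "(2*t+2*h) powr p = h powr p * (2*t/h+2) powr p" using hom[of h "2*t+2*h" p] assms a by simp
  moreover have "(2*t+h) powr p = h powr p * (2*t/h+1) powr p" using hom[of h "2*t+h" p] assms a by simp
  moreover have "(2*t) powr p = h powr p * (2*t/h) powr p" using hom[of h "2*t" p] assms by simp
  moreover have "(2*t-h) powr p = h powr p * (2*t/h-1) powr p" using hom[of h "2*t-h" p] assms a by simp
  moreover have "(2*t-2*h) powr p = h powr p * (2*t/h-2) powr p" using hom[of h "2*t-2*h" p] assms a by simp
  ultimately show ?thesis unfolding D4_def by (simp add: algebra_simps)
qed

lemma Q_eq:
  assumes X: "sub_fbm M H X" and "0<h" "h\<le>t" "0<H"
  shows "\<bar>integral\<^sup>L M (\<lambda>\<omega>. (X (t+h) \<omega> - 2 * X t \<omega> + X (t-h) \<omega>)\<^sup>2) / h powr (2*H)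
             - (4 - 2 powr (2*H))\<bar> = 1/2 * \<bar>D4 (2*H) (2*t/h)\<bar>"
proof -
  have "integral\<^sup>L M (\<lambda>\<omega>. (X (t+h) \<omega> - 2 * X t \<omega> + X (t-h) \<omega>)\<^sup>2)
     = (4 - 2 powr (2*H)) * h powr (2*H) - 1/2 * (h powr (2*H) * D4 (2*H) (2*t/h))"
    using E_cov[OF X, of "t+h" t "t-h"] assms cov_identity[of h t H] bracket_hom[of h t "2*H"] by simp
  moreover have "h powr (2*H) > 0" using assms by simp
  ultimately have "integral\<^sup>L M (\<lambda>\<omega>. (X (t+h) \<omega> - 2 * X t \<omega> + X (t-h) \<omega>)\<^sup>2) / h powr (2*H)
     = (4 - 2 powr (2*H)) - 1/2 * D4 (2*H) (2*t/h)" by (simp add: field_simps)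
  then show ?thesis by (simp add: abs_mult)
qed


lemma D4_bound:
  assumes "0\<le>p" "2\<le>x"
  shows "\<bar>D4 p x\<bar> \<le> 16 * (x+2) powr p"
proof -
  have b: "\<And>k. 0 \<le> x+k \<Longrightarrow> k \<le> 2 \<Longrightarrow> (x+k) powr p \<le> (x+2) powr p"
    using assms by (intro powr_mono2) auto
  have a1: "(x+1) powr p \<le> (x+2) powr p" using b[of 1] assms by simp
  have a2: "x powr p \<le> (x+2) powr p" using b[of 0] assms by simp
  have a3: "(x-1) powr p \<le> (x+2) powr p" using b[of "-1"] assms by simp
  have a4: "(x-2) powr p \<le> (x+2) powr p" using b[of "-2"] assms by simp
  have n: "0 \<le> (x+1) powr p" "0 \<le> x powr p" "0 \<le> (x-1) powr p" "0 \<le> (x-2) powr p"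
     "0 \<le> (x+2) powr p" by simp_all
  show ?thesis unfolding D4_def abs_le_iff
    using a1 a2 a3 a4 n by (intro conjI; linarith)
qed

theorem mainTheorem12:
  fixes M :: "'a measure" and X :: "real \<Rightarrow> 'a \<Rightarrow> real" and H T :: real
  assumes "0 < H" "H < 1" "H \<noteq> 1/2" "0 < T"
    and "sub_fbm M H X"
  shows "(\<exists>L>0. ((\<lambda>h. SUP t\<in>{h..T-h}.
            \<bar>integral\<^sup>L M (\<lambda>\<omega>. (X (t+h) \<omega> - 2 * X t \<omega> + X (t-h) \<omega>)\<^sup>2) / h powr (2*H)
             - (4 - 2 powr (2*H))\<bar>) \<longlongrightarrow> L) (at_right 0))
    \<and> (\<forall>\<phi>\<in>Psi T. ((\<lambda>h. SUP t\<in>{\<phi> h..T-h}.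
            \<bar>integral\<^sup>L M (\<lambda>\<omega>. (X (t+h) \<omega> - 2 * X t \<omega> + X (t-h) \<omega>)\<^sup>2) / h powr (2*H)
             - (4 - 2 powr (2*H))\<bar>) \<longlongrightarrow> 0) (at_right 0))"
proof -
  define p where "p = 2*H"
  have p: "0<p" "p<2" "p\<noteq>1" using assms unfolding p_def by auto
  define f where "f x = 1/2 * \<bar>D4 p x\<bar>" for x
  define Q where "Q h t = \<bar>integral\<^sup>L M (\<lambda>\<omega>. (X (t+h) \<omega> - 2 * X t \<omega> + X (t-h) \<omega>)\<^sup>2) / h powr (2*H)
             - (4 - 2 powr (2*H))\<bar>" for h t
  have QE: "\<And>h t. 0<h \<Longrightarrow> h\<le>t \<Longrightarrow> Q h t = f (2*t/h)"
    unfolding Q_def f_def p_def using Q_eq[OF assms(5)] assms(1) by blast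
  have f0: "\<And>x. 0 \<le> f x" unfolding f_def by simp
  have lim: "(D4 p \<longlongrightarrow> 0) at_top" using D4_lim[OF p] by simp
  have small: "\<And>e. e>0 \<Longrightarrow> \<exists>X0\<ge>2. \<forall>x\<ge>X0. f x < e"
  proof -
    fix e :: real assume e: "e>0"
    have "eventually (\<lambda>x. dist (D4 p x) 0 < 2*e) at_top" using tendstoD[OF lim, of "2*e"] e by simp
    then obtain X0 where X0: "\<And>x. x\<ge>X0 \<Longrightarrow> dist (D4 p x) 0 < 2*e"
      unfolding eventually_at_top_linorder by blast
    show "\<exists>X0\<ge>2. \<forall>x\<ge>X0. f x < e"
      by (rule exI[of _ "max X0 2"]) (use X0 in \<open>fastforce simp: f_def mult.commute\<close>)
  qed
  obtain X0 where X0: "X0\<ge>2" "\<And>x. x\<ge>X0 \<Longrightarrow> f x < 1" using small[of 1] by auto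
  have fbd: "\<And>x. x\<ge>2 \<Longrightarrow> f x \<le> max 1 (8 * (X0+2) powr p)"
  proof -
    fix x :: real assume x: "x\<ge>2"
    show "f x \<le> max 1 (8 * (X0+2) powr p)"
    proof (cases "x \<ge> X0")
      case True then show ?thesis using X0 by force
    next
      case False
      have "\<bar>D4 p x\<bar> \<le> 16 * (x+2) powr p" using D4_bound[of p x] p x by simp
      also have "... \<le> 16 * (X0+2) powr p" using False x p by (simp add: powr_mono2)
      finally show ?thesis unfolding f_def by simp
    qed
  qed
  have bdd: "\<And>A. A \<subseteq> {2..} \<Longrightarrow> bdd_above (f ` A)"
    using fbd by (intro bdd_aboveI[of _ "max 1 (8 * (X0+2) powr p)"]) auto
  define L where "L = (SUP x\<in>{2..}. f x)"
  have fL: "\<And>x. x\<ge>2 \<Longrightarrow> f x \<le> L" unfolding L_def using bdd[of "{2..}"]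
    by (intro cSUP_upper) auto
  obtain X1 where X1: "\<And>x. x\<ge>X1 \<Longrightarrow> D4 p x \<noteq> 0"
    using D4_nz[OF p] unfolding eventually_at_top_linorder by blast
  have Lpos: "L > 0"
  proof -
    have "f (max X1 2) > 0" using X1[of "max X1 2"] unfolding f_def by simp
    then show ?thesis using fL[of "max X1 2"] by simp
  qed
  have partA: "((\<lambda>h. SUP t\<in>{h..T-h}. Q h t) \<longlongrightarrow> L) (at_right 0)"
  proof (rule tendstoI)
    fix e :: real assume e: "e>0"
    have "L - e < (SUP x\<in>{2..}. f x)" using e L_def by simp
    then obtain x1 where x1: "x1 \<ge> 2" "L - e < f x1"
      using less_cSUP_iff[of "{2..}" f "L-e"] bdd[of "{2..}"] by auto
    have "eventually (\<lambda>h. 0 < h \<and> h < 2*T/(x1+2)) (at_right 0)"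
      unfolding eventually_at_right_field using assms(4) x1
      by (intro exI[of _ "2*T/(x1+2)"]) auto
    then show "eventually (\<lambda>h. dist (SUP t\<in>{h..T-h}. Q h t) L < e) (at_right 0)"
    proof (rule eventually_mono)
      fix h assume h: "0 < h \<and> h < 2*T/(x1+2)"
      have eq: "(SUP t\<in>{h..T-h}. Q h t) = (SUP t\<in>{h..T-h}. f (2*t/h))"
        using h QE by (intro SUP_cong) auto
      define t1 where "t1 = x1*h/2"
      have "h*(x1+2) < 2*T" using h x1 by (simp add: field_simps)
      then have t1: "t1 \<in> {h..T-h}" using h x1 unfolding t1_def by (auto simp: field_simps)
      have up: "\<And>t. t \<in> {h..T-h} \<Longrightarrow> f (2*t/h) \<le> L"
        using h by (intro fL) (auto simp: field_simps)
      have bd2: "bdd_above ((\<lambda>t. f (2*t/h)) ` {h..T-h})" using up by (intro bdd_aboveI[of _ L]) auto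
      have "(SUP t\<in>{h..T-h}. f (2*t/h)) \<le> L" using t1 up by (intro cSUP_least) auto
      moreover have "f (2*t1/h) \<le> (SUP t\<in>{h..T-h}. f (2*t/h))"
        using t1 bd2 by (intro cSUP_upper) auto
      moreover have "2*t1/h = x1" using h unfolding t1_def by simp
      ultimately show "dist (SUP t\<in>{h..T-h}. Q h t) L < e"
        using x1 eq by (simp add: dist_real_def)
    qed
  qed
  have partB: "((\<lambda>h. SUP t\<in>{\<phi> h..T-h}. Q h t) \<longlongrightarrow> 0) (at_right 0)" if phi: "\<phi> \<in> Psi T" for \<phi>
  proof (rule tendstoI)
    fix e :: real assume e: "e>0"
    obtain X2 where X2: "X2\<ge>2" "\<And>x. x\<ge>X2 \<Longrightarrow> f x < e/2" using small[of "e/2"] e by auto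
    have phi0: "(\<phi> \<longlongrightarrow> 0) (at_right 0)" and phiL: "filterlim (\<lambda>h. \<phi> h / h) at_top (at_right 0)"
      using phi unfolding Psi_def by auto
    have ev1: "eventually (\<lambda>h. X2 \<le> \<phi> h / h) (at_right 0)"
      using phiL by (simp add: filterlim_at_top)
    have ev2: "eventually (\<lambda>h. dist (\<phi> h) 0 < T/2) (at_right 0)"
      using tendstoD[OF phi0, of "T/2"] assms(4) by simp
    have ev3: "eventually (\<lambda>h. 0 < h \<and> h < T/2) (at_right 0)"
      unfolding eventually_at_right_field using assms(4)
      by (intro exI[of _ "T/2"]) auto
    from ev1 ev2 ev3 show "eventually (\<lambda>h. dist (SUP t\<in>{\<phi> h..T-h}. Q h t) 0 < e) (at_right 0)"
    proof eventually_elim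
      case (elim h)
      then have h: "0<h" "h<T/2" "X2 \<le> \<phi> h / h" "\<bar>\<phi> h\<bar> < T/2" by (auto simp: dist_real_def)
      have "2 \<le> \<phi> h / h" using h X2 by linarith
      then have ph: "2*h \<le> \<phi> h" using h by (simp add: field_simps)
      have ne: "\<phi> h \<in> {\<phi> h..T-h}" using h by auto
      have each: "\<And>t. t \<in> {\<phi> h..T-h} \<Longrightarrow> Q h t < e/2"
      proof -
        fix t assume t: "t \<in> {\<phi> h..T-h}"
        have "h \<le> t" using t ph h by auto
        moreover have "X2 \<le> 2*t/h"
        proof -
          have "\<phi> h / h \<le> t / h" using t h by (simp add: divide_right_mono)
          moreover have "t/h \<le> 2*t/h" using t ph h by (simp add: field_simps)
          ultimately show ?thesis using h by linarith
        qed
        ultimately show "Q h t < e/2" using QE[of h t] X2 h by auto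
      qed
      have Q0: "\<And>t. t \<in> {\<phi> h..T-h} \<Longrightarrow> 0 \<le> Q h t" unfolding Q_def by simp
      have bd: "bdd_above ((\<lambda>t. Q h t) ` {\<phi> h..T-h})" using each
        by (intro bdd_aboveI[of _ "e/2"]) (auto intro: less_imp_le)
      have "(SUP t\<in>{\<phi> h..T-h}. Q h t) \<le> e/2" using ne each by (intro cSUP_least) (auto intro: less_imp_le)
      moreover have "Q h (\<phi> h) \<le> (SUP t\<in>{\<phi> h..T-h}. Q h t)" using ne bd by (intro cSUP_upper) auto
      ultimately show ?case using Q0[OF ne] e by (simp add: dist_real_def)
    qed
  qed
  show ?thesis
    unfolding Q_def[symmetric] using partA partB Lpos by blast
qed

end
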